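(* Let $\mathbf z(k)=\mathbf y-\mathbf u(k)$. For every $k\ge0$ and $\eta>0$, entrywise, $$\big(\mathbf I-2\eta(\tilde{\mathbf H}^+(k)+\mathbf H^-(k))\mathbf P\big)\mathbf z(k)\ \le\ \mathbf z(k+1)\ \le\ \big(\mathbf I-2\eta(\mathbf H^+(k)+\tilde{\mathbf H}^-(k))\mathbf P\big)\mathbf z(k).$$
   Context: Setup: distinct $\mathbf x_1,\dots,\mathbf x_n\in\mathbb S^{d-1}$, labels $\mathbf y\in\mathbb R^n$; network $\mathcal N(\mathbf x)=\frac1{\sqrt m}\sum_{r=1}^ma_r\mathrm{ReLU}(\mathbf w_r^\top\mathbf x+b_r)$ with fixed $a_r\in\{\pm1\}$; $\mathbf P$ symmetric positive definite; gradient descent with step $\eta$ on $\mathbf w_r,b_r$ for the loss $\frac12(\mathbf y-\mathbf u)^\top\mathbf P(\mathbf y-\mathbf u)$, using $\mathrm{ReLU}'(t)=\mathbb 1_{\{t\ge0\}}$; $\mathbf u(k)=(\mathcal N_k(\mathbf x_i))_i$ after $k$ steps. Write $\tilde{\mathbf x}_i=\frac1{\sqrt2}(\mathbf x_i,1)\in\mathbb R^{d+1}$, $\tilde{\mathbf w}_r(k)=(\mathbf w_r(k),b_r(k))\in\mathbb R^{d+1}$, $\mathcal A=\{r:a_r=1\}$, $\mathcal B=\{r:a_r=-1\}$. Define $H^\pm_{ij}(k)=\frac1m\tilde{\mathbf x}_i^\top\tilde{\mathbf x}_j\sum_{r\in\mathcal A\text{ (resp. }\mathcal B)}\mathbb 1_{\{\tilde{\mathbf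 w}_r(k)^\top\tilde{\mathbf x}_i\ge0,\ \tilde{\mathbf w}_r(k)^\top\tilde{\mathbf x}_j\ge0\}}$ ($+$ with $\mathcal A$, $-$ with $\mathcal B$), and $\tilde H^\pm_{ij}(k)=\frac1m\tilde{\mathbf x}_i^\top\tilde{\mathbf x}_j\sum_{r\in\mathcal A\text{ (resp. }\mathcal B)}\mathbb 1_{\{\tilde{\mathbf w}_r(k+1)^\top\tilde{\mathbf x}_i\ge0,\ \tilde{\mathbf w}_r(k)^\top\tilde{\mathbf x}_j\ge0\}}$. *)

theory Defs
  imports "HOL-Analysis.Analysis"
begin

text \<open>Index types: 'd (input coordinates, d = CARD('d)), 'n (samples, n = CARD('n)),
  'm (hidden neurons, m = CARD('m)).  The lifted space R^(d+1) is (real^'d) \<times> real,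
  with the product inner product.\<close>

definition relu :: "real \<Rightarrow> real" where
  "relu t = max 0 t"

definition relu' :: "real \<Rightarrow> real" where
  "relu' t = (if 0 \<le> t then 1 else 0)"

definition net :: "('m::finite \<Rightarrow> real) \<Rightarrow> ('m \<Rightarrow> real^'d) \<Rightarrow> ('m \<Rightarrow> real) \<Rightarrow> real^'d \<Rightarrow> real" where
  "net a w b v = (1 / sqrt (real CARD('m))) * (\<Sum>r\<in>UNIV. a r * relu (w r \<bullet> v + b r))"

definition outputs :: "('m::finite \<Rightarrow> real) \<Rightarrow> ('m \<Rightarrow> real^'d) \<Rightarrow> ('m \<Rightarrow> real)
    \<Rightarrow> ('n::finite \<Rightarrow> real^'d) \<Rightarrow> real^'n" where
  "outputs a w b X = (\<chi> i. net a w b (X i))"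

text \<open>Gradient of the loss 1/2 (y-u)^T P (y-u) with respect to u.\<close>
definition loss_grad_u :: "real^'n^'n \<Rightarrow> real^'n \<Rightarrow> real^'n \<Rightarrow> real^'n::finite" where
  "loss_grad_u P y u = - (scaleR (1/2) ((P + transpose P) *v (y - u)))"

text \<open>One gradient descent step on all w_r, b_r (chain rule with the ReLU' convention).\<close>
definition gd_step :: "('m::finite \<Rightarrow> real) \<Rightarrow> ('n::finite \<Rightarrow> real^'d) \<Rightarrow> real^'n \<Rightarrow> real^'n^'n \<Rightarrow> real
    \<Rightarrow> ('m \<Rightarrow> real^'d) \<times> ('m \<Rightarrow> real) \<Rightarrow> ('m \<Rightarrow> real^'d) \<times> ('m \<Rightarrow> real)" where
  "gd_step a X y P \<eta> wb =
     (let w = fst wb; b = snd wb; g = loss_grad_u P y (outputs a w b X);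
          c = (\<lambda>r i. g $ i * (1 / sqrt (real CARD('m))) * a r * relu' (w r \<bullet> X i + b r))
      in (\<lambda>r. w r - \<eta> *\<^sub>R (\<Sum>i\<in>UNIV. c r i *\<^sub>R X i),
          \<lambda>r. b r - \<eta> * (\<Sum>i\<in>UNIV. c r i)))"

primrec gd_traj :: "('m::finite \<Rightarrow> real) \<Rightarrow> ('n::finite \<Rightarrow> real^'d) \<Rightarrow> real^'n \<Rightarrow> real^'n^'n \<Rightarrow> real
    \<Rightarrow> ('m \<Rightarrow> real^'d) \<Rightarrow> ('m \<Rightarrow> real) \<Rightarrow> nat \<Rightarrow> ('m \<Rightarrow> real^'d) \<times> ('m \<Rightarrow> real)" where
  "gd_traj a X y P \<eta> w0 b0 0 = (w0, b0)"
| "gd_traj a X y P \<eta> w0 b0 (Suc k) = gd_step a X y P \<eta> (gd_traj a X y P \<eta> w0 b0 k)"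

definition u_k :: "('m::finite \<Rightarrow> real) \<Rightarrow> ('n::finite \<Rightarrow> real^'d) \<Rightarrow> real^'n \<Rightarrow> real^'n^'n \<Rightarrow> real
    \<Rightarrow> ('m \<Rightarrow> real^'d) \<Rightarrow> ('m \<Rightarrow> real) \<Rightarrow> nat \<Rightarrow> real^'n" where
  "u_k a X y P \<eta> w0 b0 k = (let wb = gd_traj a X y P \<eta> w0 b0 k in outputs a (fst wb) (snd wb) X)"

definition xt :: "('n \<Rightarrow> real^'d) \<Rightarrow> 'n \<Rightarrow> (real^'d) \<times> real" where
  "xt X i = (1 / sqrt 2) *\<^sub>R (X i, 1)"

definition wt :: "('m::finite \<Rightarrow> real) \<Rightarrow> ('n::finite \<Rightarrow> real^'d) \<Rightarrow> real^'n \<Rightarrow> real^'n^'n \<Rightarrow> real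
    \<Rightarrow> ('m \<Rightarrow> real^'d) \<Rightarrow> ('m \<Rightarrow> real) \<Rightarrow> nat \<Rightarrow> 'm \<Rightarrow> (real^'d) \<times> real" where
  "wt a X y P \<eta> w0 b0 k r = (let wb = gd_traj a X y P \<eta> w0 b0 k in (fst wb r, snd wb r))"

text \<open>Gram-type matrix: entry (i,j) = (1/m) x~_i.x~_j * #{r in S. W1 r . x~_i >= 0 and W2 r . x~_j >= 0}.
  H^+(k) = Hmat A (w~(k)) (w~(k)),  H~^+(k) = Hmat A (w~(k+1)) (w~(k)), similarly with B.\<close>
definition Hmat :: "'m::finite set \<Rightarrow> ('m \<Rightarrow> (real^'d) \<times> real) \<Rightarrow> ('m \<Rightarrow> (real^'d) \<times> real)
    \<Rightarrow> ('n::finite \<Rightarrow> real^'d) \<Rightarrow> real^'n^'n" where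
  "Hmat S W1 W2 X = (\<chi> i j. (1 / real CARD('m)) * (xt X i \<bullet> xt X j) *
       (\<Sum>r\<in>S. if W1 r \<bullet> xt X i \<ge> 0 \<and> W2 r \<bullet> xt X j \<ge> 0 then 1 else 0))"

end

theory Submission
  imports Defs
begin

lemma relu_lower: "relu' s * (s' - s) \<le> relu s' - relu s"
  by (auto simp: relu_def relu'_def)
lemma relu_upper: "relu s' - relu s \<le> relu' s' * (s' - s)"
  by (auto simp: relu_def relu'_def)

lemma xt_inner: "(p, q) \<bullet> xt X i = (p \<bullet> X i + q) / sqrt 2"
  by (simp add: xt_def inner_Pair divide_simps)

lemma xt_xt: "xt X i \<bullet> xt X j = (X i \<bullet> X j + 1) / 2"
  by (simp add: xt_def inner_Pair power2_eq_square[symmetric] power_divide)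

lemma ind_eq: "((p, q) \<bullet> xt X i \<ge> 0) = (p \<bullet> X i + q \<ge> 0)"
  by (simp add: xt_inner divide_simps)

lemma ind_eq2: "(xt X i \<bullet> (p, q) \<ge> 0) = (X i \<bullet> p + q \<ge> 0)"
  using ind_eq[of p q X i] by (simp add: inner_commute)

lemma mat_expr:
  fixes H1 H2 P :: "real^'n::finite^'n"
  shows "((mat 1 - c *\<^sub>R ((H1 + H2) ** P)) *v z) $ j = z $ j - c * (\<Sum>i\<in>UNIV. (H1 $ j $ i + H2 $ j $ i) * (P *v z) $ i)"
proof -
  have "(mat 1 - c *\<^sub>R ((H1 + H2) ** P)) *v z = z - c *\<^sub>R ((H1 + H2) *v (P *v z))"
    by (simp add: matrix_vector_mult_diff_rdistrib scaleR_matrix_vector_assoc[symmetric] matrix_vector_mul_assoc)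
  then show ?thesis by (simp add: matrix_vector_mult_def)
qed

lemma grad: "transpose P = P \<Longrightarrow> loss_grad_u P y u = - (P *v (y - u))"
  by (simp add: loss_grad_u_def vec_eq_iff matrix_vector_mult_def sum.distrib algebra_simps sum_distrib_left)

lemma sum_Collect_if: "sum f {r::'a::finite. P r} = (\<Sum>r\<in>UNIV. if P r then f r else 0)"
  using sum.inter_filter[of UNIV f P] by simp

lemma swap_helper:
  fixes G :: "'n::finite \<Rightarrow> real" and F :: "'m::finite \<Rightarrow> real"
  shows "(\<Sum>i\<in>UNIV. (c * G i * (\<Sum>r\<in>UNIV. F r * R r i)) * v i) = (\<Sum>r\<in>UNIV. F r * c * (\<Sum>i\<in>UNIV. v i * R r i * G i))"
proof -
  have "(\<Sum>i\<in>UNIV. (c * G i * (\<Sum>r\<in>UNIV. F r * R r i)) * v i) = (\<Sum>i\<in>UNIV. \<Sum>r\<in>UNIV. F r * c * (v i * R r i * G i))"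
    by (simp add: sum_distrib_left sum_distrib_right mult_ac)
  also have "\<dots> = (\<Sum>r\<in>UNIV. \<Sum>i\<in>UNIV. F r * c * (v i * R r i * G i))"
    by (rule sum.swap)
  also have "\<dots> = (\<Sum>r\<in>UNIV. F r * c * (\<Sum>i\<in>UNIV. v i * R r i * G i))"
    by (simp add: sum_distrib_left)
  finally show ?thesis .
qed

lemma core:
  fixes X :: "'n::finite \<Rightarrow> real^'d" and y :: "real^'n" and P :: "real^'n^'n"
    and a :: "'m::finite \<Rightarrow> real" and \<eta> :: real
    and w :: "'m \<Rightarrow> real^'d" and b :: "'m \<Rightarrow> real" and j :: 'n
  assumes signs: "\<forall>r. a r = 1 \<or> a r = -1" and P_sym: "transpose P = P"
  defines "w' \<equiv> fst (gd_step a X y P \<eta> (w, b))" and "b' \<equiv> snd (gd_step a X y P \<eta> (w, b))"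
    and "v \<equiv> P *v (y - outputs a w b X)"
    and "W \<equiv> (\<lambda>r. (w r, b r))" and "W' \<equiv> (\<lambda>r. (fst (gd_step a X y P \<eta> (w, b)) r, snd (gd_step a X y P \<eta> (w, b)) r))"
  shows "2 * \<eta> * (\<Sum>i\<in>UNIV. (Hmat {r. a r = 1} W W X $ j $ i + Hmat {r. a r = -1} W' W X $ j $ i) * v $ i)
           \<le> outputs a w' b' X $ j - outputs a w b X $ j"
    and "outputs a w' b' X $ j - outputs a w b X $ j
           \<le> 2 * \<eta> * (\<Sum>i\<in>UNIV. (Hmat {r. a r = 1} W' W X $ j $ i + Hmat {r. a r = -1} W W X $ j $ i) * v $ i)"
proof -
  define m where "m = real CARD('m)"
  define sm where "sm = sqrt m"
  have m_pos: "m > 0" by (simp add: m_def)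
  have sm_pos: "sm > 0" using m_pos by (simp add: sm_def)
  have sm_sq: "(1/sm) * (1/sm) = 1/m" using m_pos by (simp add: sm_def)
  define s where "s r i = w r \<bullet> X i + b r" for r i
  define s' where "s' r i = w' r \<bullet> X i + b' r" for r i
  define G where "G i = xt X i \<bullet> xt X j" for i
  define T where "T r = (\<Sum>i\<in>UNIV. v $ i * relu' (s r i) * G i)" for r
  define c where "c r i = - v $ i * (1/sm) * a r * relu' (s r i)" for r i
  have w'_eq: "w' r = w r - \<eta> *\<^sub>R (\<Sum>i\<in>UNIV. c r i *\<^sub>R X i)" for r
    unfolding w'_def gd_step_def by (simp add: grad[OF P_sym] v_def s_def sm_def m_def c_def Let_def)
  have b'_eq: "b' r = b r - \<eta> * (\<Sum>i\<in>UNIV. c r i)" for r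
    unfolding b'_def gd_step_def by (simp add: grad[OF P_sym] v_def s_def sm_def m_def c_def Let_def)
  have s'_eq: "s' r j = s r j + 2 * \<eta> * a r / sm * T r" for r
  proof -
    have "s' r j = s r j - \<eta> * (\<Sum>i\<in>UNIV. c r i * (X i \<bullet> X j + 1))"
      by (simp add: s'_def s_def w'_eq b'_eq inner_diff_left inner_sum_left sum.distrib algebra_simps)
    also have "\<dots> = s r j + 2 * \<eta> * a r / sm * T r"
    proof -
      have "- \<eta> * (\<Sum>i\<in>UNIV. c r i * (X i \<bullet> X j + 1)) = (\<Sum>i\<in>UNIV. - \<eta> * (c r i * (X i \<bullet> X j + 1)))"
        by (simp add: sum_distrib_left)
      also have "\<dots> = (\<Sum>i\<in>UNIV. 2 * \<eta> * a r / sm * (v $ i * relu' (s r i) * G i))"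
        using sm_pos by (intro sum.cong) (simp_all add: c_def G_def xt_xt field_simps)
      also have "\<dots> = 2 * \<eta> * a r / sm * T r" by (simp add: T_def sum_distrib_left)
      finally show ?thesis by simp
    qed
    finally show ?thesis .
  qed
  have out: "outputs a w' b' X $ j - outputs a w b X $ j = (\<Sum>r\<in>UNIV. (1/sm) * a r * (relu (s' r j) - relu (s r j)))"
    by (simp add: outputs_def net_def s_def s'_def sm_def m_def sum_distrib_left sum_subtractf algebra_simps)
  have H: "Hmat {r. a r = \<sigma>} U1 W X $ j $ i = (1/m) * G i * (\<Sum>r\<in>UNIV. (if a r = \<sigma> then relu' (U1 r \<bullet> xt X j) else 0) * relu' (s r i))"
    for \<sigma> U1 i
    unfolding Hmat_def
    by (auto simp: sum_Collect_if m_def G_def inner_commute W_def ind_eq ind_eq2 s_def relu'_def intro!: sum.cong)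
  have indW: "relu' (W r \<bullet> xt X j) = relu' (s r j)" for r
    by (simp add: W_def relu'_def ind_eq s_def)
  have indW': "relu' (W' r \<bullet> xt X j) = relu' (s' r j)" for r
    by (simp add: W'_def relu'_def ind_eq s'_def w'_def b'_def)
  have rhs: "2 * \<eta> * (\<Sum>i\<in>UNIV. (Hmat {r. a r = \<sigma>1} U1 W X $ j $ i + Hmat {r. a r = \<sigma>2} U2 W X $ j $ i) * v $ i)
     = (\<Sum>r\<in>UNIV. 2 * \<eta> * ((if a r = \<sigma>1 then relu' (U1 r \<bullet> xt X j) else 0) * (1/m) * T r
          + (if a r = \<sigma>2 then relu' (U2 r \<bullet> xt X j) else 0) * (1/m) * T r))" for \<sigma>1 \<sigma>2 U1 U2
  proof -
    have "(\<Sum>i\<in>UNIV. (Hmat {r. a r = \<sigma>1} U1 W X $ j $ i + Hmat {r. a r = \<sigma>2} U2 W X $ j $ i) * v $ i)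
      = (\<Sum>i\<in>UNIV. ((1/m) * G i * (\<Sum>r\<in>UNIV. (if a r = \<sigma>1 then relu' (U1 r \<bullet> xt X j) else 0) * relu' (s r i))) * v $ i)
       + (\<Sum>i\<in>UNIV. ((1/m) * G i * (\<Sum>r\<in>UNIV. (if a r = \<sigma>2 then relu' (U2 r \<bullet> xt X j) else 0) * relu' (s r i))) * v $ i)"
      by (simp add: H distrib_right sum.distrib)
    also have "\<dots> = (\<Sum>r\<in>UNIV. (if a r = \<sigma>1 then relu' (U1 r \<bullet> xt X j) else 0) * (1/m) * T r)
        + (\<Sum>r\<in>UNIV. (if a r = \<sigma>2 then relu' (U2 r \<bullet> xt X j) else 0) * (1/m) * T r)"
      unfolding swap_helper T_def by simp
    finally show ?thesis by (simp add: sum.distrib[symmetric] sum_distrib_left)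
  qed
  show "2 * \<eta> * (\<Sum>i\<in>UNIV. (Hmat {r. a r = 1} W W X $ j $ i + Hmat {r. a r = -1} W' W X $ j $ i) * v $ i)
           \<le> outputs a w' b' X $ j - outputs a w b X $ j"
    unfolding rhs out
  proof (rule sum_mono)
    fix r
    have d: "s' r j - s r j = 2 * \<eta> * a r / sm * T r" using s'_eq[of r] by simp
    show "2 * \<eta> * ((if a r = 1 then relu' (W r \<bullet> xt X j) else 0) * (1/m) * T r
          + (if a r = -1 then relu' (W' r \<bullet> xt X j) else 0) * (1/m) * T r)
         \<le> (1/sm) * a r * (relu (s' r j) - relu (s r j))"
    proof (cases "a r = 1")
      case True
      have "(1/sm) * (relu' (s r j) * (s' r j - s r j)) \<le> (1/sm) * (relu (s' r j) - relu (s r j))"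
        using relu_lower sm_pos by (intro mult_left_mono) auto
      moreover have "(1/sm) * (relu' (s r j) * (s' r j - s r j)) = 2 * \<eta> * (relu' (s r j) * (1/m) * T r)"
        unfolding d True using sm_sq by (simp add: field_simps)
      ultimately show ?thesis using True indW by simp
    next
      case False
      then have F: "a r = -1" using signs by blast
      have "(1/sm) * (relu (s' r j) - relu (s r j)) \<le> (1/sm) * (relu' (s' r j) * (s' r j - s r j))"
        using relu_upper sm_pos by (intro mult_left_mono) auto
      moreover have "(1/sm) * (relu' (s' r j) * (s' r j - s r j)) = - 2 * \<eta> * (relu' (s' r j) * (1/m) * T r)"
        unfolding d F using sm_sq by (simp add: field_simps)
      ultimately show ?thesis using F indW' by simp
    qed
  qed
  show "outputs a w' b' X $ j - outputs a w b X $ j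
           \<le> 2 * \<eta> * (\<Sum>i\<in>UNIV. (Hmat {r. a r = 1} W' W X $ j $ i + Hmat {r. a r = -1} W W X $ j $ i) * v $ i)"
    unfolding rhs out
  proof (rule sum_mono)
    fix r
    have d: "s' r j - s r j = 2 * \<eta> * a r / sm * T r" using s'_eq[of r] by simp
    show "(1/sm) * a r * (relu (s' r j) - relu (s r j)) \<le>
         2 * \<eta> * ((if a r = 1 then relu' (W' r \<bullet> xt X j) else 0) * (1/m) * T r
          + (if a r = -1 then relu' (W r \<bullet> xt X j) else 0) * (1/m) * T r)"
    proof (cases "a r = 1")
      case True
      have "(1/sm) * (relu (s' r j) - relu (s r j)) \<le> (1/sm) * (relu' (s' r j) * (s' r j - s r j))"
        using relu_upper sm_pos by (intro mult_left_mono) auto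
      moreover have "(1/sm) * (relu' (s' r j) * (s' r j - s r j)) = 2 * \<eta> * (relu' (s' r j) * (1/m) * T r)"
        unfolding d True using sm_sq by (simp add: field_simps)
      ultimately show ?thesis using True indW' by simp
    next
      case False
      then have F: "a r = -1" using signs by blast
      have "(1/sm) * (relu' (s r j) * (s' r j - s r j)) \<le> (1/sm) * (relu (s' r j) - relu (s r j))"
        using relu_lower sm_pos by (intro mult_left_mono) auto
      moreover have "(1/sm) * (relu' (s r j) * (s' r j - s r j)) = - 2 * \<eta> * (relu' (s r j) * (1/m) * T r)"
        unfolding d F using sm_sq by (simp add: field_simps)
      ultimately show ?thesis using F indW by simp
    qed
  qed
qed

theorem lemma1:
  fixes X :: "'n::finite \<Rightarrow> real^'d" and y :: "real^'n" and P :: "real^'n^'n"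
    and a :: "'m::finite \<Rightarrow> real" and \<eta> :: real
    and w0 :: "'m \<Rightarrow> real^'d" and b0 :: "'m \<Rightarrow> real" and k :: nat
  assumes distinct: "inj X"
    and sphere: "\<forall>i. norm (X i) = 1"
    and signs: "\<forall>r. a r = 1 \<or> a r = -1"
    and P_sym: "transpose P = P"
    and P_pd: "\<forall>v. v \<noteq> 0 \<longrightarrow> v \<bullet> (P *v v) > 0"
    and eta_pos: "\<eta> > 0"
  shows "let u = u_k a X y P \<eta> w0 b0; W = wt a X y P \<eta> w0 b0;
             A = {r. a r = 1}; B = {r. a r = -1};
             z = (\<lambda>k. y - u k);
             Hp = Hmat A (W k) (W k) X; Hm = Hmat B (W k) (W k) X;
             Htp = Hmat A (W (Suc k)) (W k) X; Htm = Hmat B (W (Suc k)) (W k) X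
         in \<forall>i. ((mat 1 - (2 * \<eta>) *\<^sub>R ((Htp + Hm) ** P)) *v z k) $ i \<le> z (Suc k) $ i
              \<and> z (Suc k) $ i \<le> ((mat 1 - (2 * \<eta>) *\<^sub>R ((Hp + Htm) ** P)) *v z k) $ i"
  proof -
  obtain w b where wb: "gd_traj a X y P \<eta> w0 b0 k = (w, b)" by fastforce
  have uk: "u_k a X y P \<eta> w0 b0 k = outputs a w b X" by (simp add: u_k_def wb)
  have uk1: "u_k a X y P \<eta> w0 b0 (Suc k) = outputs a (fst (gd_step a X y P \<eta> (w, b))) (snd (gd_step a X y P \<eta> (w, b))) X"
    by (simp add: u_k_def wb Let_def)
  have Wk: "wt a X y P \<eta> w0 b0 k = (\<lambda>r. (w r, b r))" by (simp add: wt_def wb fun_eq_iff)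
  have Wk1: "wt a X y P \<eta> w0 b0 (Suc k) = (\<lambda>r. (fst (gd_step a X y P \<eta> (w, b)) r, snd (gd_step a X y P \<eta> (w, b)) r))"
    by (simp add: wt_def wb fun_eq_iff Let_def)
  show ?thesis
    unfolding Let_def uk uk1 Wk Wk1 mat_expr
  proof (intro allI conjI)
    fix j
    note c1 = core(1)[OF signs P_sym, where \<eta>=\<eta> and X=X and y=y and w=w and b=b and j=j]
    note c2 = core(2)[OF signs P_sym, where \<eta>=\<eta> and X=X and y=y and w=w and b=b and j=j]
    show "(y - outputs a w b X) $ j - 2 * \<eta> * (\<Sum>i\<in>UNIV. (Hmat {r. a r = 1} (\<lambda>r. (fst (gd_step a X y P \<eta> (w, b)) r, snd (gd_step a X y P \<eta> (w, b)) r)) (\<lambda>r. (w r, b r)) X $ j $ i + Hmat {r. a r = - 1} (\<lambda>r. (w r, b r)) (\<lambda>r. (w r, b r)) X $ j $ i) * (P *v (y - outputs a w b X)) $ i)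
      \<le> (y - outputs a (fst (gd_step a X y P \<eta> (w, b))) (snd (gd_step a X y P \<eta> (w, b))) X) $ j"
      using c2 by simp
    show "(y - outputs a (fst (gd_step a X y P \<eta> (w, b))) (snd (gd_step a X y P \<eta> (w, b))) X) $ j \<le>
      (y - outputs a w b X) $ j - 2 * \<eta> * (\<Sum>i\<in>UNIV. (Hmat {r. a r = 1} (\<lambda>r. (w r, b r)) (\<lambda>r. (w r, b r)) X $ j $ i + Hmat {r. a r = - 1} (\<lambda>r. (fst (gd_step a X y P \<eta> (w, b)) r, snd (gd_step a X y P \<eta> (w, b)) r)) (\<lambda>r. (w r, b r)) X $ j $ i) * (P *v (y - outputs a w b X)) $ i)"
      using c1 by simp
  qed
qed

end
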